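(* For every fixed positive integer $p$, $$\lim_{d\to\infty}\frac{1}{d}\cdot\frac{|B(d,p)\cap\mathbb{P}^d_\circ|}{\kappa(B(d,p)\cap\mathbb{P}^d_\circ)}=\frac{1}{p}.$$
   Context: A point of $\mathbb{Z}^d$ is primitive if its coordinates are relatively prime; $\mathbb{P}^d_\circ$ denotes the set of primitive points of $\mathbb{Z}^d$ whose first non-zero coordinate is positive. $B(d,p)=\{x\in\mathbb{R}^d:\|x\|_1\le p\}$. For a finite $\mathcal{X}\subset\mathbb{R}^d$, $\kappa(\mathcal{X})=\max_{1\le i\le d}\sum_{x\in\mathcal{X}}|x_i|$. *)

theory Defs
  imports Complex_Main
begin

text \<open>Points of Z^d are represented as integer lists of length d (coordinate i is x ! i).\<close>

definition primitive :: "int list \<Rightarrow> bool" where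
  "primitive x \<longleftrightarrow> Gcd (set x) = 1"

definition first_nonzero_pos :: "int list \<Rightarrow> bool" where
  "first_nonzero_pos x \<longleftrightarrow> (\<exists>i<length x. x ! i > 0 \<and> (\<forall>j<i. x ! j = 0))"

definition Pcirc :: "nat \<Rightarrow> int list set" where
  "Pcirc d = {x. length x = d \<and> primitive x \<and> first_nonzero_pos x}"

definition Bint :: "nat \<Rightarrow> nat \<Rightarrow> int list set" where
  "Bint d p = {x. length x = d \<and> (\<Sum>c\<leftarrow>x. \<bar>c\<bar>) \<le> int p}"

definition kappa :: "nat \<Rightarrow> int list set \<Rightarrow> int" where
  "kappa d X = Max ((\<lambda>i. \<Sum>x\<in>X. \<bar>x ! i\<bar>) ` {0..<d})"

end

theory Submission
  imports Defs
begin



lemma sl_upd: "k < length xs \<Longrightarrow> sum_list (xs[k := v]) = sum_list xs + v - xs!k" for xs :: "int list"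
proof (induction xs arbitrary: k)
  case Nil then show ?case by simp
next
  case (Cons a xs) then show ?case by (cases k) auto
qed

lemma abs_le_nrm: "c \<in> set x \<Longrightarrow> \<bar>c\<bar> \<le> (\<Sum>c\<leftarrow>x. \<bar>c\<bar>)" for x :: "int list"
  by (rule member_le_sum_list) auto

lemma nrm_nonneg: "0 \<le> (\<Sum>c\<leftarrow>x. \<bar>c\<bar>)" for x :: "int list"
  by (induction x) auto

lemma fin_Bint: "finite (Bint d m)"
proof (rule finite_subset)
  show "Bint d m \<subseteq> {xs. set xs \<subseteq> {-int m..int m} \<and> length xs = d}"
    unfolding Bint_def using abs_le_nrm by (force simp: abs_le_iff)
  show "finite {xs. set xs \<subseteq> {-int m..int m} \<and> length xs = d}"
    by (rule finite_lists_length_eq) simp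
qed

lemma nrm_upd: "k < length x \<Longrightarrow> (\<Sum>c\<leftarrow>x[k:=v]. \<bar>c\<bar>) = (\<Sum>c\<leftarrow>x. \<bar>c\<bar>) + \<bar>v\<bar> - \<bar>x!k\<bar>" for x :: "int list"
  by (simp add: map_update sl_upd)

lemma Bint0: "Bint d 0 \<subseteq> {replicate d 0}"
proof
  fix x assume "x \<in> Bint d 0"
  then have "length x = d" "(\<Sum>c\<leftarrow>x. \<bar>c\<bar>) \<le> 0" by (auto simp: Bint_def)
  then have "\<forall>c\<in>set x. c = 0" using abs_le_nrm by force
  then show "x \<in> {replicate d 0}" using \<open>length x = d\<close> replicate_length_same by fastforce
qed

lemma Bint_step: "Bint d (Suc m) \<subseteq> Bint d m \<union> (\<lambda>(x,i,s). x[i := x!i + s]) ` (Bint d m \<times> {0..<d} \<times> {-1,1})"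
proof
  fix x assume x: "x \<in> Bint d (Suc m)"
  show "x \<in> Bint d m \<union> (\<lambda>(x,i,s). x[i := x!i + s]) ` (Bint d m \<times> {0..<d} \<times> {-1,1})"
  proof (cases "x \<in> Bint d m")
    case True then show ?thesis by simp
  next
    case False
    with x have len: "length x = d" and nx: "(\<Sum>c\<leftarrow>x. \<bar>c\<bar>) = int m + 1" by (auto simp: Bint_def)
    have "\<exists>i<d. x!i \<noteq> 0"
    proof (rule ccontr)
      assume "\<not> ?thesis"
      then have "\<forall>c\<in>set x. c = 0" using len by (auto simp: in_set_conv_nth)
      then have "(\<Sum>c\<leftarrow>x. \<bar>c\<bar>) = 0" by (induction x) auto
      with nx show False by simp
    qed
    then obtain i where i: "i < d" "x!i \<noteq> 0" by auto
    define s where "s = sgn (x!i)"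
    define y where "y = x[i := x!i - s]"
    have s: "s \<in> {-1,1}" using i by (auto simp: s_def sgn_if)
    have "\<bar>x!i - s\<bar> = \<bar>x!i\<bar> - 1" using i by (auto simp: s_def sgn_if)
    then have "(\<Sum>c\<leftarrow>y. \<bar>c\<bar>) = int m" using nrm_upd[of i x] i len nx by (simp add: y_def)
    then have "y \<in> Bint d m" using len by (simp add: Bint_def y_def)
    moreover have "x = y[i := y!i + s]" using i len by (simp add: y_def)
    ultimately show ?thesis using s i by force
  qed
qed

lemma card_Bint: "card (Bint d m) \<le> (2*d+1)^m"
proof (induction m)
  case 0
  then show ?case using card_mono[OF _ Bint0, of d] by simp
next
  case (Suc m)
  let ?A = "Bint d m \<times> {0..<d} \<times> {-1,1::int}"
  have "card (Bint d (Suc m)) \<le> card (Bint d m \<union> (\<lambda>(x,i,s). x[i := x!i + s]) ` ?A)"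
    by (rule card_mono[OF _ Bint_step]) (simp add: fin_Bint)
  also have "\<dots> \<le> card (Bint d m) + card ((\<lambda>(x,i,s). x[i := x!i + s]) ` ?A)"
    by (rule card_Un_le)
  also have "\<dots> \<le> card (Bint d m) + card ?A"
    using card_image_le[of ?A] fin_Bint by simp
  also have "\<dots> = card (Bint d m) * (2*d+1)"
    by (simp add: card_cartesian_product)
  also have "\<dots> \<le> (2*d+1)^m * (2*d+1)" using Suc by (simp add: add_mono mult_right_mono)
  finally show ?case by (simp add: mult.commute)
qed


lemma fnp_cases:
  assumes "\<exists>i<length x. x!i \<noteq> 0"
  shows "first_nonzero_pos x \<or> first_nonzero_pos (map uminus x)"
proof -
  define i where "i = (LEAST i. i < length x \<and> x!i \<noteq> 0)"
  have i: "i < length x" "x!i \<noteq> 0" using LeastI_ex[OF assms] by (auto simp: i_def)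
  have j: "\<forall>j<i. x!j = 0"
  proof (intro allI impI)
    fix j assume "j < i"
    then have "\<not> (j < length x \<and> x!j \<noteq> 0)" using not_less_Least i_def by blast
    with \<open>j<i\<close> i show "x!j = 0" by auto
  qed
  show ?thesis
  proof (cases "x!i > 0")
    case True then show ?thesis using i j unfolding first_nonzero_pos_def by auto
  next
    case False
    then have "(map uminus x)!i > 0" using i by auto
    then show ?thesis using i j unfolding first_nonzero_pos_def by auto
  qed
qed

lemma fnp_excl: "first_nonzero_pos x \<Longrightarrow> \<not> first_nonzero_pos (map uminus x)"
proof
  assume "first_nonzero_pos x" "first_nonzero_pos (map uminus x)"
  then obtain i j where i: "i < length x" "x!i > 0" "\<forall>k<i. x!k = 0"
    and j: "j < length x" "-(x!j) > 0" "\<forall>k<j. -(x!k) = 0"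
    unfolding first_nonzero_pos_def by auto
  show False
  proof (cases i j rule: linorder_cases)
    case less then show ?thesis using i j by force
  next
    case equal then show ?thesis using i j by force
  next
    case greater then show ?thesis using i j by force
  qed
qed

lemma prim_neg: "primitive (map uminus x) = primitive x"
  by (simp add: primitive_def)

lemma prim_nz: "primitive x \<Longrightarrow> \<exists>i<length x. x!i \<noteq> 0"
proof (rule ccontr)
  assume "primitive x" "\<not> (\<exists>i<length x. x!i \<noteq> 0)"
  then have "set x \<subseteq> {0}" by (auto simp: in_set_conv_nth)
  then have "Gcd (set x) = 0" by simp
  with \<open>primitive x\<close> show False by (simp add: primitive_def)
qed

definition sw :: "nat \<Rightarrow> int list \<Rightarrow> int list" where
  "sw i x = x[0 := x!i, i := x!0]"

lemma sw_len[simp]: "length (sw i x) = length x" by (simp add: sw_def)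

lemma sw_set: "i < length x \<Longrightarrow> set (sw i x) = set x"
  unfolding sw_def by (rule set_swap) auto

lemma sw_nrm: "i < length x \<Longrightarrow> (\<Sum>c\<leftarrow>sw i x. \<bar>c\<bar>) = (\<Sum>c\<leftarrow>x. \<bar>c\<bar>)"
proof -
  assume "i < length x"
  then have "0 < length x" by linarith
  then show ?thesis unfolding sw_def using \<open>i < length x\<close> by (cases "i = 0") (auto simp: nrm_upd nth_list_update)
qed

lemma sw_sw: "i < length x \<Longrightarrow> sw i (sw i x) = x"
proof -
  assume "i < length x"
  then have "0 < length x" by linarith
  then show ?thesis unfolding sw_def using \<open>i < length x\<close> by (intro nth_equalityI) (auto simp: nth_list_update)
qed

lemma sw_nth0: "i < length x \<Longrightarrow> sw i x ! 0 = x ! i"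
proof -
  assume "i < length x"
  then have "0 < length x" by linarith
  then show ?thesis unfolding sw_def using \<open>i < length x\<close> by (cases "i = 0") (auto simp: nth_list_update)
qed

lemma sum_sym:
  fixes d p :: nat
  defines "X \<equiv> Bint d p \<inter> Pcirc d"
  assumes "i < d"
  shows "(\<Sum>x\<in>X. \<bar>x!i\<bar>) = (\<Sum>x\<in>X. \<bar>x!0\<bar>)"
proof -
  define Y where "Y = Bint d p \<inter> {x. primitive x}"
  define N where "N = {x\<in>Y. first_nonzero_pos (map uminus x)}"
  have XY: "X = {x\<in>Y. first_nonzero_pos x}"
    unfolding X_def Y_def Pcirc_def Bint_def by auto
  have finY: "finite Y" unfolding Y_def using fin_Bint by simp
  have Yun: "Y = X \<union> N" unfolding XY N_def using fnp_cases[OF prim_nz] unfolding Y_def by blast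
  have disj: "X \<inter> N = {}" unfolding XY N_def using fnp_excl by auto
  have nn: "map uminus (map uminus x) = x" for x :: "int list" by (simp add: comp_def)
  have 2: "(\<Sum>x\<in>Y. \<bar>x!j\<bar>) = 2 * (\<Sum>x\<in>X. \<bar>x!j\<bar>)" if "j < d" for j
  proof -
    have "(\<Sum>x\<in>N. \<bar>x!j\<bar>) = (\<Sum>x\<in>X. \<bar>x!j\<bar>)"
    proof (rule sum.reindex_bij_witness[where i="map uminus" and j="map uminus"])
      show "\<And>a. a \<in> X \<Longrightarrow> map uminus (map uminus a) = a" by (rule nn)
      show "\<And>a. a \<in> N \<Longrightarrow> map uminus (map uminus a) = a" by (rule nn)
      show "\<And>a. a \<in> X \<Longrightarrow> map uminus a \<in> N"
        unfolding XY N_def Y_def Bint_def by (auto simp: prim_neg comp_def nn)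
      show "\<And>a. a \<in> N \<Longrightarrow> map uminus a \<in> X"
        unfolding XY N_def Y_def Bint_def by (auto simp: prim_neg comp_def nn)
      show "\<And>a. a \<in> N \<Longrightarrow> \<bar>map uminus a ! j\<bar> = \<bar>a ! j\<bar>"
        using that unfolding N_def Y_def Bint_def by auto
    qed
    then show ?thesis using sum.union_disjoint[of X N] finY Yun disj
      by (metis finite_Un mult_2)
  qed
  have "(\<Sum>x\<in>Y. \<bar>x!i\<bar>) = (\<Sum>x\<in>Y. \<bar>x!0\<bar>)"
  proof (rule sum.reindex_bij_witness[where i="sw i" and j="sw i"])
    show "\<And>a. a \<in> Y \<Longrightarrow> sw i (sw i a) = a" using assms unfolding Y_def Bint_def by (auto simp: sw_sw)
    show "\<And>a. a \<in> Y \<Longrightarrow> sw i a \<in> Y" using assms unfolding Y_def Bint_def primitive_def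
      by (auto simp: sw_set sw_nrm)
    show "\<And>a. a \<in> Y \<Longrightarrow> sw i (sw i a) = a" using assms unfolding Y_def Bint_def by (auto simp: sw_sw)
    show "\<And>a. a \<in> Y \<Longrightarrow> sw i a \<in> Y" using assms unfolding Y_def Bint_def primitive_def
      by (auto simp: sw_set sw_nrm)
    show "\<And>a. a \<in> Y \<Longrightarrow> \<bar>sw i a ! 0\<bar> = \<bar>a ! i\<bar>" using assms unfolding Y_def Bint_def
      by (auto simp: sw_nth0)
  qed
  then show ?thesis using 2[of 0] 2[of i] assms by simp
qed

definition ind :: "nat \<Rightarrow> nat set \<Rightarrow> int list" where
  "ind d S = map (\<lambda>i. if i \<in> S then 1 else 0) [0..<d]"

lemma card_lower:
  assumes "0 < p" "p \<le> d"
  shows "d choose p \<le> card (Bint d p \<inter> Pcirc d)"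
proof -
  let ?F = "{S. S \<subseteq> {0..<d} \<and> card S = p}"
  have cF: "card ?F = d choose p" using n_subsets[of "{0..<d}" p] by simp
  have inj: "inj_on (ind d) ?F"
  proof (rule inj_onI)
    fix S T assume S: "S \<in> ?F" and T: "T \<in> ?F" and e: "ind d S = ind d T"
    have "i \<in> S \<longleftrightarrow> i \<in> T" if "i < d" for i
      using arg_cong[OF e, of "\<lambda>l. l!i"] that by (auto simp: ind_def split: if_splits)
    then show "S = T" using S T by auto
  qed
  have sub: "ind d ` ?F \<subseteq> Bint d p \<inter> Pcirc d"
  proof
    fix x assume "x \<in> ind d ` ?F"
    then obtain S where S: "S \<subseteq> {0..<d}" "card S = p" and x: "x = ind d S" by auto
    have finS: "finite S" using S finite_subset by blast
    have Sne: "S \<noteq> {}" using S assms by auto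
    have len: "length x = d" by (simp add: x ind_def)
    have "(\<Sum>c\<leftarrow>x. \<bar>c\<bar>) = (\<Sum>i\<leftarrow>[0..<d]. (if i \<in> S then 1 else 0::int))"
      by (simp add: x ind_def comp_def if_distrib)
    also have "\<dots> = (\<Sum>i\<in>{0..<d}. (if i \<in> S then 1 else 0::int))"
      by (simp add: sum_list_distinct_conv_sum_set)
    also have "\<dots> = (\<Sum>i\<in>{0..<d} \<inter> S. 1::int)"
      using sum.inter_restrict[of "{0..<d}" "\<lambda>_. 1::int" S] by simp
    also have "\<dots> = int p" using S by (simp add: Int_absorb1)
    finally have nx: "(\<Sum>c\<leftarrow>x. \<bar>c\<bar>) = int p" .
    define m where "m = Min S"
    have m: "m \<in> S" "\<forall>j\<in>S. m \<le> j" using finS Sne by (auto simp: m_def)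
    have md: "m < d" using m S by auto
    have xm: "x!m = 1" using m md by (simp add: x ind_def)
    have fnp: "first_nonzero_pos x"
      unfolding first_nonzero_pos_def
    proof (intro exI conjI allI impI)
      show "m < length x" using md len by simp
      show "x!m > 0" using xm by simp
      fix j assume "j < m"
      then have "j \<notin> S" using m by force
      then show "x!j = 0" using \<open>j < m\<close> md by (simp add: x ind_def)
    qed
    have "1 \<in> set x" using xm md len by (metis nth_mem)
    then have "Gcd (set x) dvd 1" by (rule Gcd_dvd)
    then have "Gcd (set x) = 1" using Gcd_int_greater_eq_0[of "set x"] by (simp add: zdvd1_eq)
    then show "x \<in> Bint d p \<inter> Pcirc d"
      using len nx fnp by (simp add: Bint_def Pcirc_def primitive_def)
  qed
  have "card ?F \<le> card (Bint d p \<inter> Pcirc d)"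
    by (rule card_inj_on_le[OF inj sub]) (simp add: fin_Bint)
  then show ?thesis using cF by simp
qed


lemma kappa_eq:
  fixes d p :: nat
  defines "X \<equiv> Bint d p \<inter> Pcirc d"
  assumes "0 < d"
  shows "kappa d X = (\<Sum>x\<in>X. \<bar>x!0\<bar>)"
proof -
  have eq: "(\<Sum>x\<in>X. \<bar>x!i\<bar>) = (\<Sum>x\<in>X. \<bar>x!0\<bar>)" if "i \<in> {0..<d}" for i
  proof -
    from that have "i < d" by simp
    then show ?thesis unfolding X_def by (rule sum_sym)
  qed
  have ne: "{0..<d} \<noteq> {}" using assms by simp
  have "(\<lambda>i. \<Sum>x\<in>X. \<bar>x!i\<bar>) ` {0..<d} = (\<lambda>i. \<Sum>x\<in>X. \<bar>x!0\<bar>) ` {0..<d}"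
    by (rule image_cong[OF refl eq])
  also have "\<dots> = {\<Sum>x\<in>X. \<bar>x!0\<bar>}" using ne by (simp only: image_constant_conv if_False)
  finally have "(\<lambda>i. \<Sum>x\<in>X. \<bar>x!i\<bar>) ` {0..<d} = {\<Sum>x\<in>X. \<bar>x!0\<bar>}" .
  then show ?thesis unfolding kappa_def by (simp only: Max_singleton)
qed

lemma dS:
  fixes d p :: nat
  defines "X \<equiv> Bint d p \<inter> Pcirc d"
  shows "int d * (\<Sum>x\<in>X. \<bar>x!0\<bar>) = (\<Sum>x\<in>X. (\<Sum>c\<leftarrow>x. \<bar>c\<bar>))"
proof -
  have "(\<Sum>x\<in>X. (\<Sum>c\<leftarrow>x. \<bar>c\<bar>)) = (\<Sum>x\<in>X. \<Sum>i\<in>{0..<d}. \<bar>x!i\<bar>)"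
  proof (rule sum.cong)
    fix x assume "x \<in> X"
    then have "length x = d" by (simp add: X_def Bint_def)
    then show "(\<Sum>c\<leftarrow>x. \<bar>c\<bar>) = (\<Sum>i\<in>{0..<d}. \<bar>x!i\<bar>)"
      by (simp add: sum_list_sum_nth)
  qed simp
  also have "\<dots> = (\<Sum>i\<in>{0..<d}. \<Sum>x\<in>X. \<bar>x!i\<bar>)" by (rule sum.swap)
  also have "\<dots> = (\<Sum>i\<in>{0..<d}. \<Sum>x\<in>X. \<bar>x!0\<bar>)"
  proof (rule sum.cong)
    fix i assume "i \<in> {0..<d}"
    then have "i < d" by simp
    then show "(\<Sum>x\<in>X. \<bar>x!i\<bar>) = (\<Sum>x\<in>X. \<bar>x!0\<bar>)" unfolding X_def by (rule sum_sym)
  qed simp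
  finally show ?thesis by simp
qed


lemma S_le:
  fixes d p :: nat
  defines "X \<equiv> Bint d p \<inter> Pcirc d"
  shows "(\<Sum>x\<in>X. (\<Sum>c\<leftarrow>x. \<bar>c\<bar>)) \<le> int p * int (card X)"
proof -
  have "(\<Sum>x\<in>X. (\<Sum>c\<leftarrow>x. \<bar>c\<bar>)) \<le> (\<Sum>x\<in>X. int p)"
    by (rule sum_mono) (simp add: X_def Bint_def)
  then show ?thesis by (simp add: mult.commute)
qed

lemma S_ge:
  fixes d p :: nat
  defines "X \<equiv> Bint d p \<inter> Pcirc d"
  shows "int p * int (card X) - (\<Sum>x\<in>X. (\<Sum>c\<leftarrow>x. \<bar>c\<bar>)) \<le> int p * int (card (Bint d (p-1)))"
proof -
  have finX: "finite X" by (simp add: X_def fin_Bint)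
  have "int p * int (card X) - (\<Sum>x\<in>X. (\<Sum>c\<leftarrow>x. \<bar>c\<bar>)) = (\<Sum>x\<in>X. int p - (\<Sum>c\<leftarrow>x. \<bar>c\<bar>))"
    by (simp add: sum_subtractf mult.commute)
  also have "\<dots> \<le> (\<Sum>x\<in>X. if x \<in> Bint d (p-1) then int p else 0)"
  proof (rule sum_mono)
    fix x assume "x \<in> X"
    then have "length x = d" "(\<Sum>c\<leftarrow>x. \<bar>c\<bar>) \<le> int p" by (auto simp: X_def Bint_def)
    then show "int p - (\<Sum>c\<leftarrow>x. \<bar>c\<bar>) \<le> (if x \<in> Bint d (p-1) then int p else 0)"
      using nrm_nonneg[of x] by (auto simp: Bint_def)
  qed
  also have "\<dots> = int p * int (card (X \<inter> Bint d (p-1)))"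
    using sum.inter_restrict[OF finX, of "\<lambda>_. int p" "Bint d (p-1)"] by (simp add: mult.commute)
  also have "\<dots> \<le> int p * int (card (Bint d (p-1)))"
    by (intro mult_left_mono) (auto intro: card_mono fin_Bint)
  finally show ?thesis .
qed



theorem theorem7p4:
  fixes p :: nat
  assumes "p > 0"
  shows "(\<lambda>d. (1 / real d) * (real (card (Bint d p \<inter> Pcirc d))
            / real_of_int (kappa d (Bint d p \<inter> Pcirc d)))) \<longlonglongrightarrow> 1 / real p"
proof -
  define c where "c d = real (card (Bint d p \<inter> Pcirc d))" for d
  define S where "S d = real_of_int (\<Sum>x\<in>Bint d p \<inter> Pcirc d. (\<Sum>c\<leftarrow>x. \<bar>c\<bar>))" for d
  define B where "B d = real (card (Bint d (p-1)))" for d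
  obtain q where pq: "p = Suc q" using assms gr0_implies_Suc by blast
  have ev: "\<forall>\<^sub>F d in sequentially. p \<le> d" by (rule eventually_ge_at_top)
  have c_lo: "(real d / real p) ^ p \<le> c d" if "p \<le> d" for d
  proof -
    have "(real d / real p) ^ p \<le> real (d choose p)" by (rule binomial_ge_n_over_k_pow_k[OF that])
    also have "\<dots> \<le> c d" unfolding c_def using card_lower[OF assms that] by simp
    finally show ?thesis .
  qed
  have c_pos: "c d > 0" if "p \<le> d" for d
  proof -
    have "0 < (real d / real p) ^ p" using that assms by simp
    then show ?thesis using c_lo[OF that] by linarith
  qed
  have S_up: "S d \<le> real p * c d" for d
  proof -
    have "real_of_int (\<Sum>x\<in>Bint d p \<inter> Pcirc d. (\<Sum>c\<leftarrow>x. \<bar>c\<bar>)) \<le> real_of_int (int p * int (card (Bint d p \<inter> Pcirc d)))"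
      using S_le[of d p] by (simp only: of_int_le_iff)
    then show ?thesis unfolding S_def c_def by simp
  qed
  have S_lo: "real p * c d - S d \<le> real p * B d" for d
  proof -
    have "real_of_int (int p * int (card (Bint d p \<inter> Pcirc d)) - (\<Sum>x\<in>Bint d p \<inter> Pcirc d. (\<Sum>c\<leftarrow>x. \<bar>c\<bar>))) \<le> real_of_int (int p * int (card (Bint d (p-1))))"
      using S_ge[of p d] by (simp only: of_int_le_iff)
    then show ?thesis unfolding S_def c_def B_def by simp
  qed
  have B_up: "B d \<le> (3 * real d) ^ q" if "p \<le> d" for d
  proof -
    have "B d \<le> real ((2*d+1)^(p-1))" unfolding B_def using card_Bint[of d "p-1"] by linarith
    also have "\<dots> = (2 * real d + 1) ^ q" using pq by (simp add: add.commute)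
    also have "\<dots> \<le> (3 * real d) ^ q" using that pq by (intro power_mono) auto
    finally show ?thesis .
  qed
  have R_up: "B d / c d \<le> 3 ^ q * real p ^ p / real d" if "p \<le> d" for d
  proof -
    have dpos: "real d > 0" using that assms by simp
    have "B d / c d \<le> (3 * real d) ^ q / (real d / real p) ^ p"
      using B_up[OF that] c_lo[OF that] c_pos[OF that] assms dpos
      by (intro frac_le) auto
    also have "\<dots> = 3 ^ q * real p ^ p / real d"
    proof -
      have dq: "real d ^ q > 0" using dpos by simp
      have pp: "real p ^ p > 0" using assms by simp
      have "(real d / real p) ^ p = real d * real d ^ q / real p ^ p" using pq by (simp add: power_divide)
      moreover have "(3 * real d) ^ q = 3 ^ q * real d ^ q" by (simp add: power_mult_distrib)
      ultimately have "(3 * real d) ^ q / (real d / real p) ^ p = (3 ^ q * real d ^ q) * real p ^ p / (real d * real d ^ q)"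
        by simp
      also have "\<dots> = 3 ^ q * real p ^ p / real d" using dq dpos by simp
      finally show ?thesis .
    qed
    finally show ?thesis .
  qed
  have R0: "(\<lambda>d. B d / c d) \<longlonglongrightarrow> 0"
  proof (rule tendsto_sandwich[of "\<lambda>_. 0" _ _ "\<lambda>d. 3 ^ q * real p ^ p / real d"])
    show "\<forall>\<^sub>F n in sequentially. 0 \<le> B n / c n"
      unfolding B_def c_def by simp
    show "\<forall>\<^sub>F n in sequentially. B n / c n \<le> 3 ^ q * real p ^ p / real n"
      using ev by eventually_elim (rule R_up)
    show "(\<lambda>_. 0::real) \<longlonglongrightarrow> 0" by simp
    show "(\<lambda>d. 3 ^ q * real p ^ p / real d) \<longlonglongrightarrow> 0" by (rule lim_const_over_n)
  qed
  have Sc: "(\<lambda>d. S d / c d) \<longlonglongrightarrow> real p"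
  proof (rule tendsto_sandwich[of "\<lambda>d. real p - real p * (B d / c d)" _ _ "\<lambda>_. real p"])
    show "\<forall>\<^sub>F n in sequentially. real p - real p * (B n / c n) \<le> S n / c n"
      using ev
    proof eventually_elim
      case (elim d)
      have "real p * c d - real p * B d \<le> S d" using S_lo[of d] by linarith
      then have "(real p * c d - real p * B d) / c d \<le> S d / c d"
        using c_pos[OF elim] by (intro divide_right_mono) auto
      then show ?case using c_pos[OF elim] by (simp add: diff_divide_distrib)
    qed
    show "\<forall>\<^sub>F n in sequentially. S n / c n \<le> real p"
      using ev
    proof eventually_elim
      case (elim d)
      then show ?case using S_up[of d] c_pos[OF elim] by (simp add: divide_le_eq)
    qed
    show "(\<lambda>_. real p) \<longlonglongrightarrow> real p" by simp
    have "(\<lambda>d. real p - real p * (B d / c d)) \<longlonglongrightarrow> real p - real p * 0"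
      by (intro tendsto_intros R0)
    then show "(\<lambda>d. real p - real p * (B d / c d)) \<longlonglongrightarrow> real p" by simp
  qed
  have inv: "(\<lambda>d. inverse (S d / c d)) \<longlonglongrightarrow> inverse (real p)"
    using assms by (intro tendsto_inverse Sc) simp
  have inv2: "(\<lambda>d. inverse (S d / c d)) \<longlonglongrightarrow> 1 / real p"
    using inv by (simp only: inverse_eq_divide[of "real p"])
  show ?thesis
  proof (rule Lim_transform_eventually[OF inv2])
    show "\<forall>\<^sub>F d in sequentially. inverse (S d / c d) = (1 / real d) * (real (card (Bint d p \<inter> Pcirc d))
            / real_of_int (kappa d (Bint d p \<inter> Pcirc d)))"
      using ev
    proof eventually_elim
      case (elim d)
      then have d0: "0 < d" using assms by simp
      have "int d * kappa d (Bint d p \<inter> Pcirc d) = (\<Sum>x\<in>Bint d p \<inter> Pcirc d. (\<Sum>c\<leftarrow>x. \<bar>c\<bar>))"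
        using kappa_eq[OF d0, of p] dS[of d p] by simp
      then have k: "real d * real_of_int (kappa d (Bint d p \<inter> Pcirc d)) = S d"
        unfolding S_def by (metis of_int_mult of_int_of_nat_eq)
      then have "real_of_int (kappa d (Bint d p \<inter> Pcirc d)) = S d / real d" using d0
        by (simp add: field_simps)
      then show ?case using d0 by (simp add: c_def)
    qed
  qed
qed

end
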